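(* Let $F$ be a graph of diameter $2$, $n=|V(F)|$, $t=\delta(F)$, and let $l>n$ be an integer. If $C_{l-1}^{n-1}>n!\,C_{l-1}^{n-t-1}$, then $f_{2l}<z_1$.
   Context: All graphs are simple, finite, undirected. The $F$-degree of a vertex $v$ in $G$ is the number of subgraphs of $G$ (not necessarily induced) isomorphic to $F$ and containing $v$. $A_{2l-1}$ is the graph with vertex set $\{1,\dots,2l-1\}$ in which distinct $i,j$ are adjacent iff $|i-j|\le l-1$; $F_{2l}$ is obtained from $A_{2l-1}$ by adding a new vertex $2l$ joined exactly to $1,\dots,t$. $z_1$ is the $F$-degree of vertex $1$ in $A_{2l-1}$ and $f_{2l}$ the $F$-degree of vertex $2l$ in $F_{2l}$. $C_m^k=\frac{m!}{k!(m-k)!}$ for integers $m\ge k\ge 0$, and $C_m^k=0$ otherwise. *)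

theory Defs
  imports Main
begin

type_synonym 'a graph = "'a set \<times> 'a set set"

definition simple_graph :: "'a graph \<Rightarrow> bool" where
  "simple_graph G \<longleftrightarrow> finite (fst G) \<and> (\<forall>e\<in>snd G. e \<subseteq> fst G \<and> card e = 2)"

definition adj :: "'a graph \<Rightarrow> 'a \<Rightarrow> 'a \<Rightarrow> bool" where
  "adj G u v \<longleftrightarrow> {u, v} \<in> snd G"

fun is_walk :: "'a graph \<Rightarrow> 'a list \<Rightarrow> bool" where
  "is_walk G [] = False"
| "is_walk G [v] = (v \<in> fst G)"
| "is_walk G (u # v # vs) = (u \<in> fst G \<and> adj G u v \<and> is_walk G (v # vs))"

definition connected_graph :: "'a graph \<Rightarrow> bool" where
  "connected_graph G \<longleftrightarrow> fst G \<noteq> {} \<and>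
     (\<forall>u\<in>fst G. \<forall>v\<in>fst G. \<exists>p. is_walk G p \<and> hd p = u \<and> last p = v)"

definition gdist :: "'a graph \<Rightarrow> 'a \<Rightarrow> 'a \<Rightarrow> nat" where
  "gdist G u v = (LEAST k. \<exists>p. is_walk G p \<and> hd p = u \<and> last p = v \<and> length p = Suc k)"

definition diameter :: "'a graph \<Rightarrow> nat" where
  "diameter G = Max {gdist G u v | u v. u \<in> fst G \<and> v \<in> fst G}"

definition has_diameter :: "'a graph \<Rightarrow> nat \<Rightarrow> bool" where
  "has_diameter G d \<longleftrightarrow> connected_graph G \<and> diameter G = d"

definition degree :: "'a graph \<Rightarrow> 'a \<Rightarrow> nat" where
  "degree G v = card {u \<in> fst G. adj G v u}"

definition min_degree :: "'a graph \<Rightarrow> nat" where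
  "min_degree G = Min (degree G ` fst G)"

text \<open>H is a (not necessarily induced) subgraph of G.\<close>
definition subgraph :: "'a graph \<Rightarrow> 'a graph \<Rightarrow> bool" where
  "subgraph H G \<longleftrightarrow> fst H \<subseteq> fst G \<and> snd H \<subseteq> snd G \<and> (\<forall>e\<in>snd H. e \<subseteq> fst H)"

definition graph_iso :: "'b graph \<Rightarrow> 'a graph \<Rightarrow> bool" where
  "graph_iso F H \<longleftrightarrow> (\<exists>\<phi>. bij_betw \<phi> (fst F) (fst H) \<and> snd H = (\<lambda>e. \<phi> ` e) ` snd F)"

definition F_degree :: "'b graph \<Rightarrow> 'a graph \<Rightarrow> 'a \<Rightarrow> nat" where
  "F_degree F G v = card {H. subgraph H G \<and> graph_iso F H \<and> v \<in> fst H}"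

definition A_graph :: "nat \<Rightarrow> nat graph" where
  "A_graph l = ({1..2*l-1}, {{i, j} | i j. i \<in> {1..2*l-1} \<and> j \<in> {1..2*l-1} \<and> i \<noteq> j
                                         \<and> (if i \<le> j then j - i else i - j) \<le> l - 1})"

definition F2l_graph :: "nat \<Rightarrow> nat \<Rightarrow> nat graph" where
  "F2l_graph l t = (insert (2*l) (fst (A_graph l)),
                    snd (A_graph l) \<union> {{i, 2*l} | i. i \<in> {1..t}})"

end

theory Submission
  imports Defs "HOL-Combinatorics.Permutations"
begin

lemma A_edge_sub: "e \<in> snd (A_graph l) \<Longrightarrow> e \<subseteq> {1..2*l-1}"
  unfolding A_graph_def by auto

lemma finite_A_edges: "finite (snd (A_graph l))"
  by (rule finite_subset[of _ "Pow {1..2*l-1}"]) (use A_edge_sub in blast, simp)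

lemma F2l_nbr:
  assumes "{2*l, w} \<in> snd (F2l_graph l t)" "w \<noteq> 2*l"
  shows "w \<in> {1..t}"
proof -
  have "{2*l, w} \<notin> snd (A_graph l)" using A_edge_sub[of "{2*l,w}" l] by auto
  then obtain i where "{2*l, w} = {i, 2*l}" "i \<in> {1..t}" using assms(1) unfolding F2l_graph_def by auto
  then show ?thesis using assms(2) by (metis doubleton_eq_iff)
qed

lemma F2l_nbr2:
  assumes "{a, w} \<in> snd (F2l_graph l t)" "w \<noteq> 2*l" "a \<noteq> 2*l" "l \<ge> 1"
  shows "w \<le> a + l - 1"
proof -
  have "{a, w} \<in> snd (A_graph l)"
  proof (rule ccontr)
    assume "{a, w} \<notin> snd (A_graph l)"
    then obtain i where "{a, w} = {i, 2*l}" using assms(1) unfolding F2l_graph_def by auto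
    then show False using assms(2,3) by (metis doubleton_eq_iff)
  qed
  then obtain i j where "{a,w} = {i,j}" "(if i \<le> j then j - i else i - j) \<le> l - 1"
    unfolding A_graph_def by auto
  then show ?thesis using assms(4) by (auto simp: doubleton_eq_iff split: if_splits)
qed

lemma F2l_vert: "w \<in> fst (F2l_graph l t) \<Longrightarrow> w \<noteq> 2*l \<Longrightarrow> 1 \<le> w"
  unfolding F2l_graph_def A_graph_def by auto

lemma finite_F2l_edges: "finite (snd (F2l_graph l t))"
  unfolding F2l_graph_def using finite_A_edges[of l] by auto

lemma dist2:
  assumes "simple_graph F" "has_diameter F 2" "u \<in> fst F" "v \<in> fst F"
  shows "u = v \<or> {u,v} \<in> snd F \<or> (\<exists>x\<in>fst F. {u,x} \<in> snd F \<and> {x,v} \<in> snd F)"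
proof -
  let ?P = "\<lambda>k. \<exists>p. is_walk F p \<and> hd p = u \<and> last p = v \<and> length p = Suc k"
  obtain p where p: "is_walk F p" "hd p = u" "last p = v"
    using assms unfolding has_diameter_def connected_graph_def by blast
  have "p \<noteq> []" using p(1) by auto
  then have "?P (length p - 1)" using p by (intro exI[of _ p]) auto
  then have P: "?P (gdist F u v)" unfolding gdist_def by (rule LeastI)
  have fin: "finite {gdist F u v | u v. u \<in> fst F \<and> v \<in> fst F}"
    using assms(1) unfolding simple_graph_def by (intro finite_image_set2) auto
  have "gdist F u v \<le> diameter F" unfolding diameter_def
    by (rule Max_ge[OF fin]) (use assms in blast)
  then have le: "gdist F u v \<le> 2" using assms(2) unfolding has_diameter_def by simp
  obtain q where q: "is_walk F q" "hd q = u" "last q = v" "length q = Suc (gdist F u v)"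
    using P by blast
  show ?thesis
  proof (cases q)
    case Nil then show ?thesis using q by simp
  next
    case (Cons a q1)
    show ?thesis
    proof (cases q1)
      case Nil then show ?thesis using q Cons by simp
    next
      case (Cons b q2)
      show ?thesis
      proof (cases q2)
        case Nil then show ?thesis using q Cons \<open>q = a # q1\<close> by (simp add: adj_def)
      next
        case (Cons c q3)
        then have "q3 = []" using q(4) le \<open>q = a # q1\<close> \<open>q1 = b # q2\<close> by (cases q3) auto
        then show ?thesis using q Cons \<open>q = a # q1\<close> \<open>q1 = b # q2\<close> by (auto simp: adj_def)
      qed
    qed
  qed
qed

lemma f_struct:
  assumes sg: "simple_graph F" and dm: "has_diameter F 2"
    and n: "n = card (fst F)" and t: "t = min_degree F" and ln: "l > n"
    and sub: "subgraph H (F2l_graph l t)" and iso: "graph_iso F H" and inH: "2*l \<in> fst H"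
  shows "t < l \<and> {1..t} \<subseteq> fst H \<and> fst H \<subseteq> insert (2*l) {1..t+l-1} \<and> card (fst H) = n"
proof -
  let ?V = "fst F" and ?E = "snd F" and ?W = "fst H"
  obtain \<phi> where bij: "bij_betw \<phi> ?V ?W" and Es: "snd H = (\<lambda>e. \<phi> ` e) ` ?E"
    using iso unfolding graph_iso_def by blast
  have finV: "finite ?V" using sg unfolding simple_graph_def by simp
  have cardW: "card ?W = n" using bij n by (simp add: bij_betw_same_card)
  have inj: "inj_on \<phi> ?V" using bij by (rule bij_betw_imp_inj_on)
  have img: "\<phi> ` ?V = ?W" using bij by (rule bij_betw_imp_surj_on)
  have edge: "{\<phi> a, \<phi> b} \<in> snd (F2l_graph l t)" if "{a,b} \<in> ?E" for a b
  proof -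
    have "\<phi> ` {a,b} \<in> snd H" using that Es by blast
    then show ?thesis using sub unfolding subgraph_def by auto
  qed
  have E2: "a \<noteq> b \<and> a \<in> ?V \<and> b \<in> ?V" if "{a,b} \<in> ?E" for a b
    using sg that unfolding simple_graph_def by (metis card_2_iff doubleton_eq_iff insert_subset)
  obtain v where v: "v \<in> ?V" "\<phi> v = 2*l" using inH img by (metis imageE)
  define N where "N = {u \<in> ?V. adj F v u}"
  have "t \<le> degree F v" unfolding t min_degree_def
    by (rule Min_le) (use finV v in auto)
  then have tN: "t \<le> card N" unfolding degree_def N_def .
  have "N \<subseteq> ?V - {v}" unfolding N_def adj_def using E2 by auto
  then have "card N \<le> n - 1" using finV v n
    by (metis card_Diff_singleton card_mono finite_Diff)
  then have tl: "t < l" using tN ln by linarith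
  have nbr: "\<phi> u \<in> {1..t}" if "{v,u} \<in> ?E" for u
  proof -
    have "u \<noteq> v" "u \<in> ?V" using E2[OF that] by auto
    then have "\<phi> u \<noteq> 2*l" using v inj by (metis inj_on_def)
    then show ?thesis using F2l_nbr edge[OF that] v(2) by metis
  qed
  have "\<phi> ` N \<subseteq> {1..t}" using nbr unfolding N_def adj_def by auto
  moreover have "card (\<phi> ` N) = card N"
    using inj N_def by (intro card_image) (auto intro: inj_on_subset)
  moreover have "card (\<phi> ` N) \<le> t"
    using card_mono[OF finite_atLeastAtMost, of "\<phi> ` N" 1 t] calculation(1) by simp
  ultimately have "\<phi> ` N = {1..t}" using tN by (intro card_subset_eq) auto
  moreover have "\<phi> ` N \<subseteq> ?W" using img N_def by auto
  ultimately have sub1: "{1..t} \<subseteq> ?W" by simp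
  have sub2: "w \<in> insert (2*l) {1..t+l-1}" if "w \<in> ?W" for w
  proof (cases "w = 2*l")
    case False
    have w1: "1 \<le> w" using F2l_vert[OF _ False] that sub unfolding subgraph_def by auto
    have "w \<in> \<phi> ` ?V" using that img by simp
    then obtain u where u: "u \<in> ?V" "\<phi> u = w" by (metis imageE)
    have "u = v \<or> {u,v} \<in> ?E \<or> (\<exists>x\<in>?V. {u,x} \<in> ?E \<and> {x,v} \<in> ?E)"
      using dist2[OF sg dm u(1) v(1)] .
    moreover have "u \<noteq> v" using u v False by auto
    moreover have "w \<le> t + l - 1" if "{u,v} \<in> ?E"
    proof -
      have "{v,u} \<in> ?E" using that by (metis insert_commute)
      then have "\<phi> u \<in> {1..t}" by (rule nbr)
      then show ?thesis using u tl by auto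
    qed
    moreover have "w \<le> t + l - 1" if "x \<in> ?V" "{u,x} \<in> ?E" "{x,v} \<in> ?E" for x
    proof -
      have "{v,x} \<in> ?E" using that by (metis insert_commute)
      then have px: "\<phi> x \<in> {1..t}" using nbr by auto
      have "{\<phi> x, w} \<in> snd (F2l_graph l t)" using edge[OF that(2)] u by (metis insert_commute)
      then have "w \<le> \<phi> x + l - 1" using F2l_nbr2[OF _ False] px tl by auto
      then show ?thesis using px by auto
    qed
    ultimately have "w \<le> t + l - 1" by blast
    then show ?thesis using w1 by auto
  qed simp
  show ?thesis using tl sub1 sub2 cardW by blast
qed

lemma f_bound:
  assumes sg: "simple_graph F" and dm: "has_diameter F 2"
    and n: "n = card (fst F)" and t: "t = min_degree F" and ln: "l > n"
  shows "F_degree F (F2l_graph l t) (2 * l) \<le> fact n * ((l - 1) choose (n - t - 1))"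
proof -
  let ?V = "fst F" and ?E = "snd F"
  have finV: "finite ?V" using sg unfolding simple_graph_def by simp
  define Ss where "Ss = {S. S \<subseteq> {t+1..t+l-1} \<and> card S = n-t-1}"
  define Ws where "Ws = (\<lambda>S. insert (2*l) ({1..t} \<union> S)) ` Ss"
  define \<beta> where "\<beta> W = (SOME b. bij_betw b ?V W)" for W :: "nat set"
  define K where "K W = (\<lambda>p. (W, (\<lambda>e. (\<beta> W \<circ> p) ` e) ` ?E)) ` {p. p permutes ?V}" for W
  have cSs: "card Ss = (l - 1) choose (n-t-1)"
    unfolding Ss_def using n_subsets[of "{t+1..t+l-1}" "n-t-1"] ln by simp
  have finSs: "finite Ss" unfolding Ss_def by simp
  have cWs: "card Ws \<le> (l - 1) choose (n-t-1)" unfolding Ws_def using card_image_le[OF finSs] cSs by simp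
  have finWs: "finite Ws" unfolding Ws_def using finSs by simp
  have cK: "card (K W) \<le> fact n" for W
    unfolding K_def using card_image_le[OF finite_permutations[OF finV]] card_permutations[OF n[symmetric] finV]
    by simp
  have finK: "finite (K W)" for W unfolding K_def using finite_permutations[OF finV] by simp
  have incl: "{H. subgraph H (F2l_graph l t) \<and> graph_iso F H \<and> 2*l \<in> fst H} \<subseteq> (\<Union>W\<in>Ws. K W)"
  proof
    fix H assume "H \<in> {H. subgraph H (F2l_graph l t) \<and> graph_iso F H \<and> 2*l \<in> fst H}"
    then have sub: "subgraph H (F2l_graph l t)" and iso: "graph_iso F H" and inH: "2*l \<in> fst H" by auto
    have st: "t < l" "{1..t} \<subseteq> fst H" "fst H \<subseteq> insert (2*l) {1..t+l-1}" "card (fst H) = n"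
      using f_struct[OF sg dm n t ln sub iso inH] by auto
    let ?W = "fst H"
    define S where "S = ?W - insert (2*l) {1..t}"
    have finW: "finite ?W" using st(3) finite_subset by blast
    have "S \<subseteq> {t+1..t+l-1}" unfolding S_def using st(3) by auto
    moreover have "card S = n - t - 1"
    proof -
      have "card (insert (2*l) {1..t}) = t + 1" using st(1) by simp
      moreover have "insert (2*l) {1..t} \<subseteq> ?W" using st(2) inH by auto
      ultimately show ?thesis unfolding S_def using finW st(4) by (simp add: card_Diff_subset)
    qed
    ultimately have "S \<in> Ss" unfolding Ss_def by auto
    moreover have "?W = insert (2*l) ({1..t} \<union> S)" unfolding S_def using st(2) inH by auto
    ultimately have WWs: "?W \<in> Ws" unfolding Ws_def by blast
    obtain \<phi> where bij: "bij_betw \<phi> ?V ?W" and Es: "snd H = (\<lambda>e. \<phi> ` e) ` ?E"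
      using iso unfolding graph_iso_def by blast
    have "\<exists>b. bij_betw b ?V ?W" using finite_same_card_bij[OF finV finW] st(4) n by simp
    then have bb: "bij_betw (\<beta> ?W) ?V ?W" unfolding \<beta>_def by (rule someI_ex)
    define p where "p x = (if x \<in> ?V then inv_into ?V (\<beta> ?W) (\<phi> x) else x)" for x
    have "bij_betw (inv_into ?V (\<beta> ?W) \<circ> \<phi>) ?V ?V"
      using bij bij_betw_inv_into[OF bb] bij_betw_trans by blast
    then have "bij_betw p ?V ?V" by (rule bij_betw_cong[THEN iffD1, rotated]) (simp add: p_def)
    then have pp: "p permutes ?V" by (rule bij_imp_permutes) (simp add: p_def)
    have agree: "(\<beta> ?W \<circ> p) x = \<phi> x" if "x \<in> ?V" for x
    proof -
      have "\<phi> x \<in> \<beta> ?W ` ?V" using bb bij that unfolding bij_betw_def by blast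
      then show ?thesis using that by (simp add: p_def f_inv_into_f)
    qed
    have Esub: "e \<subseteq> ?V" if "e \<in> ?E" for e using sg that unfolding simple_graph_def by auto
    have "(\<lambda>e. (\<beta> ?W \<circ> p) ` e) ` ?E = (\<lambda>e. \<phi> ` e) ` ?E"
      by (rule image_cong[OF refl], rule image_cong[OF refl]) (use agree Esub in blast)
    then have "H = (?W, (\<lambda>e. (\<beta> ?W \<circ> p) ` e) ` ?E)" using Es by (simp add: prod_eq_iff)
    then have "H \<in> K ?W" unfolding K_def using pp by blast
    then show "H \<in> (\<Union>W\<in>Ws. K W)" using WWs by blast
  qed
  have "F_degree F (F2l_graph l t) (2 * l) \<le> card (\<Union>W\<in>Ws. K W)"
    unfolding F_degree_def by (rule card_mono) (use incl finWs finK in auto)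
  also have "\<dots> \<le> (\<Sum>W\<in>Ws. card (K W))" by (rule card_UN_le[OF finWs])
  also have "\<dots> \<le> (\<Sum>W\<in>Ws. fact n)" by (rule sum_mono) (use cK in auto)
  also have "\<dots> = card Ws * fact n" by simp
  also have "\<dots> \<le> fact n * ((l - 1) choose (n - t - 1))" using cWs by simp
  finally show ?thesis .
qed

lemma z_bound:
  assumes sg: "simple_graph F" and dm: "has_diameter F 2"
    and n: "n = card (fst F)" and ln: "l > n"
  shows "(l - 1) choose (n - 1) \<le> F_degree F (A_graph l) 1"
proof -
  let ?V = "fst F" and ?E = "snd F"
  have finV: "finite ?V" using sg unfolding simple_graph_def by simp
  have n1: "n \<ge> 1" using dm finV n unfolding has_diameter_def connected_graph_def
    by (simp add: Suc_leI card_gt_0_iff)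
  define Ss where "Ss = {S. S \<subseteq> {2..l} \<and> card S = n-1}"
  define \<gamma> where "\<gamma> S = (SOME b. bij_betw b ?V (insert 1 S))" for S :: "nat set"
  define J where "J S = (insert 1 S, (\<lambda>e. \<gamma> S ` e) ` ?E)" for S
  have cSs: "card Ss = (l - 1) choose (n-1)"
    unfolding Ss_def using n_subsets[of "{2..l}" "n-1"] by simp
  have injJ: "inj_on J Ss"
  proof
    fix S S' assume "S \<in> Ss" "S' \<in> Ss" "J S = J S'"
    then have "insert 1 S = insert 1 S'" "1 \<notin> S" "1 \<notin> S'" unfolding J_def Ss_def by auto
    then show "S = S'" by (metis insert_ident)
  qed
  have fA: "fst (A_graph l) = {1..2*l-1}" by (simp add: A_graph_def)
  have finT0: "finite (Pow (fst (A_graph l)) \<times> Pow (snd (A_graph l)))"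
    using finite_A_edges[of l] fA by simp
  have "{H. subgraph H (A_graph l) \<and> graph_iso F H \<and> 1 \<in> fst H} \<subseteq> Pow (fst (A_graph l)) \<times> Pow (snd (A_graph l))"
    unfolding subgraph_def by (auto simp: mem_Times_iff)
  then have finT: "finite {H. subgraph H (A_graph l) \<and> graph_iso F H \<and> 1 \<in> fst H}"
    using finT0 finite_subset by blast
  have incl: "J ` Ss \<subseteq> {H. subgraph H (A_graph l) \<and> graph_iso F H \<and> 1 \<in> fst H}"
  proof
    fix H assume "H \<in> J ` Ss"
    then obtain S where S: "S \<in> Ss" and H: "H = J S" by blast
    have S1: "S \<subseteq> {2..l}" "card S = n - 1" using S unfolding Ss_def by auto
    have finS: "finite S" using S1(1) finite_subset by blast
    have "1 \<notin> S" using S1 by auto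
    then have ce: "card (insert 1 S) = card ?V" using finS S1 n n1 by simp
    have "\<exists>b. bij_betw b ?V (insert 1 S)"
      by (rule finite_same_card_bij[OF finV]) (use finS ce in auto)
    then have bb: "bij_betw (\<gamma> S) ?V (insert 1 S)" unfolding \<gamma>_def by (rule someI_ex)
    have inj: "inj_on (\<gamma> S) ?V" and img: "\<gamma> S ` ?V = insert 1 S" using bb by (simp_all add: bij_betw_def)
    have Wsub: "insert 1 S \<subseteq> {1..l}" using S1 ln by auto
    have edge: "\<gamma> S ` e \<in> snd (A_graph l) \<and> \<gamma> S ` e \<subseteq> insert 1 S" if e: "e \<in> ?E" for e
    proof -
      have "e \<subseteq> ?V" "card e = 2" using sg e unfolding simple_graph_def by auto
      then obtain a b where ab: "e = {a,b}" "a \<noteq> b" "a \<in> ?V" "b \<in> ?V" by (metis card_2_iff insert_subset)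
      have ne: "\<gamma> S a \<noteq> \<gamma> S b" using inj ab by (metis inj_on_def)
      have ia: "\<gamma> S a \<in> {1..l}" "\<gamma> S b \<in> {1..l}" using img ab Wsub by blast+
      have "{\<gamma> S a, \<gamma> S b} \<in> snd (A_graph l)" unfolding A_graph_def snd_conv
        by (rule CollectI, rule exI[of _ "\<gamma> S a"], rule exI[of _ "\<gamma> S b"]) (use ia ne in auto)
      then show ?thesis using ab img by auto
    qed
    have "{1..l} \<subseteq> {1..2*l-1}" using ln by auto
    then have "insert 1 S \<subseteq> fst (A_graph l)" using Wsub fA by blast
    then have "subgraph H (A_graph l)" unfolding H J_def subgraph_def using edge by auto
    moreover have "graph_iso F H" unfolding H J_def graph_iso_def using bb by auto
    ultimately show "H \<in> {H. subgraph H (A_graph l) \<and> graph_iso F H \<and> 1 \<in> fst H}"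
      unfolding H J_def by auto
  qed
  have "(l - 1) choose (n - 1) = card (J ` Ss)" using card_image[OF injJ] cSs by simp
  also have "\<dots> \<le> F_degree F (A_graph l) 1" unfolding F_degree_def by (rule card_mono[OF finT incl])
  finally show ?thesis .
qed

theorem lemma8:
  fixes F :: "'a graph" and n t l :: nat
  assumes "simple_graph F"
    and "has_diameter F 2"
    and "n = card (fst F)"
    and "t = min_degree F"
    and "l > n"
    and "(l - 1) choose (n - 1) > fact n * ((l - 1) choose (n - t - 1))"
  shows "F_degree F (F2l_graph l t) (2 * l) < F_degree F (A_graph l) 1"
  using f_bound[OF assms(1-5)] z_bound[OF assms(1,2,3,5)] assms(6) by linarith

end
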